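(* For all $c\in\mathbb{N}^+$ with $c>1$, as $n\to\infty$, $$\sup\left\{\frac{|f|_{\mathcal{C}}}{|f|_{\mathcal{U}^c}}: f\in H^n,\ |f|_{\mathcal{U}^c}<+\infty\right\}\in\Omega(n\log n).$$
   Context: Let $\mathcal{B}=\{0,1\}$, let $\mathcal{B}^*$ be the set of finite binary strings and $|h|$ the length of $h\in\mathcal{B}^*$. For $n\in\mathbb{N}^+$, $H^n$ is the set of all functions $\mathcal{B}^n\to\mathcal{B}$. An interpreter is a Turing machine computing a partial function $\varphi:\mathcal{B}^*\times\mathcal{B}^*\to\mathcal{B}\cup\{\bot\}$, where $\bot$ denotes non-halting (or invalid) output. For $f\in H^n$, $|f|_\varphi=\min\{|h|:\varphi(h,x)=f(x)\ \forall x\in\mathcal{B}^n\}$ ($+\infty$ if no such $h$). Turing machines have alphabet $\{0,1,b\}$ ($b$ blank), a finite state set containing an initial state and two final states accept/reject; the output is $1$ if halting in accept, $0$ if halting in reject, $\bot$ otherwise; multi-tape machines have read-only input tapes and read/write work tapes, and the transition function is a finite list of rules. $E(T)$ is a fixed prefix-free binary encoding of a machine $T$ listing its rules (of length at least 2 for every machine). For $c\in\mathbb{N}^+$, $\mathcal{U}^c$ is a time-bounded universal interpreter (a 2-input-tape, 3-work-tape machine): on $(p,x)$ with $n=|x|$, it checks within $n^c$ steps whether $p=E(T)u$ for a two-input-tape machine $T$ and $u\in\mathcal{B}^*$ (outputting $\bot$ if not, or if the check does not finish), then simulates $T$ on $(u,x)$ with an efficient universal simulation (Hennie–Stearns, overhead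 $O(t\log t)$ for $t$ simulated steps), devoting at most $n^c$ of its own steps to the simulation; it outputs $T$'s output if $T$ halts within this budget and $0$ otherwise. For fixed $p$ it runs in at most $\beta n^c$ steps for a constant $\beta$. In particular, if a Turing machine computes $g:\mathcal{B}^*\to\mathcal{B}$ in time $O(n^{c'})$ with $c'<c$, there is $h\in\mathcal{B}^*$ with $\mathcal{U}^c(h,x)=g(x)$ for all $x$ of sufficiently large length. A Boolean circuit on $n$ inputs is a DAG with a unique sink (output) whose sources are labelled by input indices in $\{1,\dots,n\}$ and whose other vertices (gates) are labelled AND, OR (two incoming edges) or NOT (one incoming edge); its size $|C|$ is its number of vertices. The circuit interpreter $\mathcal{C}$ reads a program $h=0^{\lceil\log_2 n\rceil}1\,[\text{binary expansion of } n]\,0^{|C|}1\,[\text{description of vertex } i]_{i=1}^{|C|}$, each vertex being described by its label and its parents/input index using $\max\{2\lceil\log_2|C|\rceil,\lceil\log_2 n\rceil\}$ bits beyond the label bits, so a circuit $C$ on $n$ inputs has encoding length $L(|C|,n)=2\lceil\log_2 n\rceil+2+|C|(3+\max\{2\lceil\log_2|C|\rceil,\lceil\log_2 n\rceil\})$; $\mathcal{C}(h,x)$ is the circuit's output on $x\in\mathcal{B}^n$, and $\bot$ if $h$ is malformed. Hence $|f|_{\mathcal{C}}=\min\{L(|C|,n): C \text{ computes } f\}$. *)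

theory Defs
  imports Complex_Main "HOL-Library.Landau_Symbols"
begin

text \<open>Binary strings are bool lists; an interpreter is a map
  bool list => bool list => bool option, where None is the undefined output.
  A function f in H^n is any f :: bool list => bool, only its values on
  strings of length n matter.\<close>

type_synonym interp = "bool list \<Rightarrow> bool list \<Rightarrow> bool option"

definition has_prog :: "interp \<Rightarrow> nat \<Rightarrow> (bool list \<Rightarrow> bool) \<Rightarrow> bool" where
  "has_prog \<phi> n f \<longleftrightarrow> (\<exists>h. \<forall>x. length x = n \<longrightarrow> \<phi> h x = Some (f x))"

text \<open>|f|_phi (meaningful when has_prog holds; otherwise it is +infinity in the paper).\<close>
definition prog_size :: "interp \<Rightarrow> nat \<Rightarrow> (bool list \<Rightarrow> bool) \<Rightarrow> nat" where
  "prog_size \<phi> n f =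
     (LEAST k. \<exists>h. length h = k \<and> (\<forall>x. length x = n \<longrightarrow> \<phi> h x = Some (f x)))"

datatype sym = S0 | S1 | Blank
datatype mv = MoveL | MoveN | MoveR

text \<open>States are natural numbers: 0 initial, 1 accept, 2 reject.
  A rule (q, reads, q', writes, moves): in state q reading the symbols reads
  (input tapes first, then work tapes) go to q', write writes on the work
  tapes, and move all heads by moves.\<close>
record tm =
  ninp :: nat
  nwork :: nat
  rules :: "(nat \<times> sym list \<times> nat \<times> sym list \<times> mv list) list"

definition wf_tm :: "tm \<Rightarrow> bool" where
  "wf_tm M \<longleftrightarrow>
     (\<forall>(q, rd, q', wr, mvs) \<in> set (rules M).
        q \<noteq> 1 \<and> q \<noteq> 2 \<and> length rd = ninp M + nwork M \<and>
        length wr = nwork M \<and> length mvs = ninp M + nwork M) \<and>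
     distinct (map (\<lambda>r. (fst r, fst (snd r))) (rules M))"

record config =
  cstate :: nat
  ipos :: "int list"
  wtapes :: "(int \<Rightarrow> sym) list"
  wpos :: "int list"

definition tape_of :: "bool list \<Rightarrow> int \<Rightarrow> sym" where
  "tape_of x i = (if 0 \<le> i \<and> i < int (length x) then (if x ! nat i then S1 else S0) else Blank)"

fun mv_delta :: "mv \<Rightarrow> int" where
  "mv_delta MoveL = -1" | "mv_delta MoveN = 0" | "mv_delta MoveR = 1"

definition init_config :: "tm \<Rightarrow> config" where
  "init_config M = \<lparr>cstate = 0, ipos = replicate (ninp M) 0,
      wtapes = replicate (nwork M) (\<lambda>_. Blank), wpos = replicate (nwork M) 0\<rparr>"

text \<open>One step on inputs xs. Halted configurations (state 1 or 2) are fixed;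
  a configuration with no applicable rule is stuck forever (never halts).\<close>
definition tm_step :: "tm \<Rightarrow> bool list list \<Rightarrow> config \<Rightarrow> config" where
  "tm_step M xs cf =
    (if cstate cf = 1 \<or> cstate cf = 2 then cf else
     (let reads = map2 tape_of xs (ipos cf) @ map2 (\<lambda>t p. t p) (wtapes cf) (wpos cf) in
      case find (\<lambda>r. fst r = cstate cf \<and> fst (snd r) = reads) (rules M) of
        None \<Rightarrow> cf
      | Some (q, rd, q', wr, mvs) \<Rightarrow>
          \<lparr>cstate = q',
           ipos = map2 (\<lambda>p m. p + mv_delta m) (ipos cf) (take (ninp M) mvs),
           wtapes = map2 (\<lambda>t (p, s). t(p := s)) (wtapes cf) (zip (wpos cf) wr),
           wpos = map2 (\<lambda>p m. p + mv_delta m) (wpos cf) (drop (ninp M) mvs)\<rparr>))"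

definition tm_run :: "tm \<Rightarrow> bool list list \<Rightarrow> nat \<Rightarrow> config" where
  "tm_run M xs t = (tm_step M xs ^^ t) (init_config M)"

definition tm_computes_in_time :: "tm \<Rightarrow> (bool list \<Rightarrow> bool) \<Rightarrow> (nat \<Rightarrow> real) \<Rightarrow> bool" where
  "tm_computes_in_time M g T \<longleftrightarrow> wf_tm M \<and> ninp M = 1 \<and>
     (\<forall>x. \<exists>t. real t \<le> T (length x) \<and>
            cstate (tm_run M [x] t) = (if g x then 1 else 2))"

text \<open>The properties of U^c used: (i) every g computable by a Turing machine
  in time O(n^c') with c' < c has a program h with U(h,x) = g(x) for all x of
  sufficiently large length; (ii) every program on which U is defined has
  the form E(T)u, hence length at least 2.
  Time O(n^c') for a total machine is rendered as a bound K*n^c' + K.\<close>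
definition univ_interp_props :: "nat \<Rightarrow> interp \<Rightarrow> bool" where
  "univ_interp_props c U \<longleftrightarrow>
     (\<forall>M g (c'::real) (K::real). c' < real c \<and>
        tm_computes_in_time M g (\<lambda>n. K * real n powr c' + K) \<longrightarrow>
        (\<exists>h N. \<forall>x. N \<le> length x \<longrightarrow> U h x = Some (g x))) \<and>
     (\<forall>h x. U h x \<noteq> None \<longrightarrow> 2 \<le> length h)"

text \<open>A circuit is a list of vertices in topological order (every DAG admits
  one); parents are referenced by earlier indices; input indices are 0-based
  (0..n-1, corresponding to 1..n in the paper). The sink is the last vertex.\<close>
datatype gate = Inp nat | GAnd nat nat | GOr nat nat | GNot nat

fun gate_uses :: "gate \<Rightarrow> nat \<Rightarrow> bool" where
  "gate_uses (Inp j) i = False"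
| "gate_uses (GAnd a b) i = (i = a \<or> i = b)"
| "gate_uses (GOr a b) i = (i = a \<or> i = b)"
| "gate_uses (GNot a) i = (i = a)"

fun gate_ok :: "nat \<Rightarrow> nat \<Rightarrow> gate \<Rightarrow> bool" where
  "gate_ok n i (Inp j) = (j < n)"
| "gate_ok n i (GAnd a b) = (a < i \<and> b < i)"
| "gate_ok n i (GOr a b) = (a < i \<and> b < i)"
| "gate_ok n i (GNot a) = (a < i)"

definition wf_circuit :: "nat \<Rightarrow> gate list \<Rightarrow> bool" where
  "wf_circuit n C \<longleftrightarrow> C \<noteq> [] \<and>
     (\<forall>i < length C. gate_ok n i (C ! i)) \<and>
     (\<forall>i. i + 1 < length C \<longrightarrow> (\<exists>k < length C. gate_uses (C ! k) i))"

fun gate_val :: "bool list \<Rightarrow> bool list \<Rightarrow> gate \<Rightarrow> bool" where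
  "gate_val x vs (Inp j) = x ! j"
| "gate_val x vs (GAnd a b) = (vs ! a \<and> vs ! b)"
| "gate_val x vs (GOr a b) = (vs ! a \<or> vs ! b)"
| "gate_val x vs (GNot a) = (\<not> vs ! a)"

definition circ_vals :: "gate list \<Rightarrow> bool list \<Rightarrow> bool list" where
  "circ_vals C x = foldl (\<lambda>vs g. vs @ [gate_val x vs g]) [] C"

definition circuit_computes :: "nat \<Rightarrow> gate list \<Rightarrow> (bool list \<Rightarrow> bool) \<Rightarrow> bool" where
  "circuit_computes n C f \<longleftrightarrow> wf_circuit n C \<and>
     (\<forall>x. length x = n \<longrightarrow> last (circ_vals C x) = f x)"

definition clog2 :: "nat \<Rightarrow> nat" where
  "clog2 m = nat \<lceil>log 2 (real m)\<rceil>"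

definition enc_len :: "nat \<Rightarrow> nat \<Rightarrow> nat" where
  "enc_len s n = 2 * clog2 n + 2 + s * (3 + max (2 * clog2 s) (clog2 n))"

definition circ_size :: "nat \<Rightarrow> (bool list \<Rightarrow> bool) \<Rightarrow> nat" where
  "circ_size n f = (LEAST m. \<exists>C. circuit_computes n C f \<and> m = enc_len (length C) n)"

end

theory Submission
  imports Defs
begin


definition andM :: tm where
  "andM = \<lparr>ninp = 1, nwork = 0, rules = [(0,[S1],0,[],[MoveR]), (0,[S0],2,[],[MoveN]), (0,[Blank],1,[],[MoveN])]\<rparr>"

definition allg :: "bool list \<Rightarrow> bool" where "allg x = (\<forall>i<length x. x ! i)"

definition cf0 :: "nat \<Rightarrow> config" where
  "cf0 t = \<lparr>cstate = 0, ipos = [int t], wtapes = [], wpos = []\<rparr>"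

lemma run_suc: "tm_run M xs (Suc t) = tm_step M xs (tm_run M xs t)"
  by (simp add: tm_run_def)

lemma step_cf0: "tm_step andM [x] (cf0 t) =
   (if t < length x then (if x ! t then cf0 (Suc t) else cf0 t\<lparr>cstate := 2\<rparr>) else cf0 t\<lparr>cstate := 1\<rparr>)"
  by (simp add: tm_step_def andM_def cf0_def tape_of_def)

lemma run_prefix: "t \<le> length x \<Longrightarrow> (\<forall>i<t. x ! i) \<Longrightarrow> tm_run andM [x] t = cf0 t"
proof (induction t)
  case 0 then show ?case by (simp add: tm_run_def init_config_def andM_def cf0_def)
next
  case (Suc t)
  then have "tm_run andM [x] t = cf0 t" by simp
  then show ?case using Suc.prems by (simp add: run_suc step_cf0)
qed

lemma wf_andM: "wf_tm andM" by (simp add: wf_tm_def andM_def)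

lemma andM_time: "tm_computes_in_time andM allg (\<lambda>n. 1 * real n powr 1 + 1)"
  unfolding tm_computes_in_time_def
proof (intro conjI allI)
  show "wf_tm andM" by (rule wf_andM)
  show "ninp andM = 1" by (simp add: andM_def)
  fix x :: "bool list"
  show "\<exists>t. real t \<le> 1 * real (length x) powr 1 + 1 \<and> cstate (tm_run andM [x] t) = (if allg x then 1 else 2)"
  proof (cases "allg x")
    case True
    then have "tm_run andM [x] (length x) = cf0 (length x)" by (simp add: allg_def run_prefix)
    then have "cstate (tm_run andM [x] (Suc (length x))) = 1" apply (simp add: run_suc) apply (subst step_cf0) by simp
    then show ?thesis using True by (intro exI[of _ "Suc (length x)"]) (cases "length x = 0", auto)
  next
    case False
    define i where "i = (LEAST i. i < length x \<and> \<not> x ! i)"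
    have ex: "\<exists>i. i < length x \<and> \<not> x ! i" using False by (auto simp: allg_def)
    have i1: "i < length x \<and> \<not> x ! i" unfolding i_def by (rule LeastI_ex[OF ex])
    have i2: "\<forall>j<i. x ! j" using not_less_Least i_def i1 by fastforce
    have "tm_run andM [x] i = cf0 i" using i1 i2 by (simp add: run_prefix)
    then have "cstate (tm_run andM [x] (Suc i)) = 2" using i1 apply (simp add: run_suc) apply (subst step_cf0) by simp
    moreover have "real (Suc i) \<le> 1 * real (length x) powr 1 + 1" using i1 by (cases "length x = 0", auto)
    ultimately show ?thesis using False by (intro exI[of _ "Suc i"]) auto
  qed
qed



fun and_circ :: "nat \<Rightarrow> gate list" where
  "and_circ 0 = [Inp 0]"
| "and_circ (Suc k) = and_circ k @ [Inp (Suc k), GAnd (2*k) (2*k+1)]"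

lemma len_and_circ: "length (and_circ k) = 2*k+1"
  by (induction k) auto

lemma len_foldl: "length (foldl (\<lambda>vs g. vs @ [gate_val x vs g]) vs C) = length vs + length C"
  by (induction C arbitrary: vs) auto

lemma circ_vals_app: "circ_vals (C @ D) x = foldl (\<lambda>vs g. vs @ [gate_val x vs g]) (circ_vals C x) D"
  by (simp add: circ_vals_def)

lemma len_circ_vals: "length (circ_vals C x) = length C"
  by (simp add: circ_vals_def len_foldl)

lemma last_and_circ: "last (circ_vals (and_circ k) x) = (\<forall>i\<le>k. x ! i)"
proof (induction k)
  case 0 then show ?case by (simp add: circ_vals_def)
next
  case (Suc k)
  let ?vs = "circ_vals (and_circ k) x"
  have l: "length ?vs = 2*k+1" by (simp add: len_circ_vals len_and_circ)
  have ne: "?vs \<noteq> []" using l by auto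
  have a: "?vs ! (2*k) = last ?vs" using l ne by (simp add: last_conv_nth)
  have "last (circ_vals (and_circ (Suc k)) x) = (last ?vs \<and> x ! Suc k)"
    using l a by (simp add: circ_vals_app nth_append)
  also have "\<dots> = (\<forall>i\<le>Suc k. x ! i)" using Suc.IH le_Suc_eq by auto
  finally show ?case .
qed

lemma gate_ok_mono: "gate_ok n i g \<Longrightarrow> n \<le> m \<Longrightarrow> gate_ok m i g"
  by (cases g) auto

lemma wf_and_circ: "wf_circuit (Suc k) (and_circ k)"
proof (induction k)
  case 0 then show ?case by (simp add: wf_circuit_def)
next
  case (Suc k)
  let ?C = "and_circ k"
  have l: "length ?C = 2*k+1" by (simp add: len_and_circ)
  have ok: "\<forall>i<length ?C. gate_ok (Suc k) i (?C ! i)" and us: "\<forall>i. i + 1 < length ?C \<longrightarrow> (\<exists>j<length ?C. gate_uses (?C ! j) i)"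
    using Suc.IH by (auto simp: wf_circuit_def)
  have "\<forall>i<length (and_circ (Suc k)). gate_ok (Suc (Suc k)) i (and_circ (Suc k) ! i)"
  proof (intro allI impI)
    fix i assume "i < length (and_circ (Suc k))"
    then have "i < 2*k+1 \<or> i = 2*k+1 \<or> i = 2*k+2" by (simp add: len_and_circ) linarith
    then show "gate_ok (Suc (Suc k)) i (and_circ (Suc k) ! i)"
    proof (elim disjE)
      assume "i < 2*k+1" then show ?thesis using ok l gate_ok_mono[of "Suc k" i] by (simp add: nth_append)
    qed (auto simp: nth_append l)
  qed
  moreover have "\<forall>i. i + 1 < length (and_circ (Suc k)) \<longrightarrow> (\<exists>j<length (and_circ (Suc k)). gate_uses (and_circ (Suc k) ! j) i)"
  proof (intro allI impI)
    fix i assume "i + 1 < length (and_circ (Suc k))"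
    then have "i + 1 < 2*k+1 \<or> i = 2*k \<or> i = 2*k+1" by (simp add: len_and_circ) linarith
    then show "\<exists>j<length (and_circ (Suc k)). gate_uses (and_circ (Suc k) ! j) i"
    proof (elim disjE)
      assume "i + 1 < 2*k+1"
      then obtain j where "j < length ?C" "gate_uses (?C ! j) i" using us l by auto
      then show ?thesis by (intro exI[of _ j]) (simp add: nth_append)
    next
      assume "i = 2*k" then show ?thesis by (intro exI[of _ "2*k+2"]) (simp add: nth_append l)
    next
      assume "i = 2*k+1" then show ?thesis by (intro exI[of _ "2*k+2"]) (simp add: nth_append l)
    qed
  qed
  ultimately show ?case by (simp add: wf_circuit_def)
qed

lemma and_circ_computes: "circuit_computes (Suc k) (and_circ k) allg"
  unfolding circuit_computes_def
proof (intro conjI allI impI)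
  show "wf_circuit (Suc k) (and_circ k)" by (rule wf_and_circ)
  fix x :: "bool list" assume "length x = Suc k"
  then show "last (circ_vals (and_circ k) x) = allg x"
    by (simp add: last_and_circ allg_def less_Suc_eq_le)
qed

lemma foldl_indep: "(\<forall>j. Inp j \<in> set C \<longrightarrow> x ! j = y ! j) \<Longrightarrow>
  foldl (\<lambda>vs g. vs @ [gate_val x vs g]) vs C = foldl (\<lambda>vs g. vs @ [gate_val y vs g]) vs C"
proof (induction C arbitrary: vs)
  case Nil then show ?case by simp
next
  case (Cons g C)
  have "gate_val x vs g = gate_val y vs g" using Cons.prems by (cases g) auto
  then show ?case using Cons by simp
qed

lemma inp_in: assumes "circuit_computes n C allg" "j < n" shows "Inp j \<in> set C"
proof (rule ccontr)
  assume nj: "Inp j \<notin> set C"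
  let ?x = "replicate n True" let ?y = "(replicate n True)[j := False]"
  have "\<forall>k. Inp k \<in> set C \<longrightarrow> ?x ! k = ?y ! k" using nj by (metis nth_list_update_neq)
  then have "circ_vals C ?x = circ_vals C ?y" unfolding circ_vals_def by (rule foldl_indep)
  moreover have "last (circ_vals C ?x) = allg ?x" "last (circ_vals C ?y) = allg ?y"
    using assms(1) by (auto simp: circuit_computes_def)
  moreover have "allg ?x" by (simp add: allg_def)
  moreover have "\<not> allg ?y" using assms(2) by (auto simp: allg_def intro!: exI[of _ j])
  ultimately show False by simp
qed

lemma len_ge: assumes "circuit_computes n C allg" shows "n \<le> length C"
proof -
  have "Inp ` {..<n} \<subseteq> set C" using inp_in[OF assms] by auto
  then have "card (Inp ` {..<n}) \<le> card (set C)" by (simp add: card_mono)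
  moreover have "card (Inp ` {..<n}) = n" by (simp add: card_image inj_on_def)
  ultimately show ?thesis using card_length le_trans by metis
qed

lemma circ_size_ge: assumes "n \<ge> 1" shows "n * clog2 n \<le> circ_size n allg"
proof -
  obtain k where k: "n = Suc k" using assms by (cases n) auto
  have ex: "\<exists>m C. circuit_computes n C allg \<and> m = enc_len (length C) n"
    using and_circ_computes k by blast
  obtain C where C: "circuit_computes n C allg" "circ_size n allg = enc_len (length C) n"
    using LeastI_ex[OF ex] unfolding circ_size_def by blast
  have "n * clog2 n \<le> length C * clog2 n" using len_ge[OF C(1)] by simp
  also have "\<dots> \<le> length C * (3 + max (2 * clog2 (length C)) (clog2 n))" by (intro mult_le_mono2) simp
  also have "\<dots> \<le> enc_len (length C) n" by (simp add: enc_len_def)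
  finally show ?thesis using C(2) by simp
qed

lemma clog2_ge: "log 2 (real n) \<le> real (clog2 n)"
proof -
  have a: "log 2 (real n) \<le> of_int \<lceil>log 2 (real n)\<rceil>" by (rule le_of_int_ceiling)
  have b: "(of_int z :: real) \<le> real (nat z)" for z :: int by (cases "z \<ge> 0") auto
  show ?thesis unfolding clog2_def using a b order_trans by blast
qed



definition restr :: "nat \<Rightarrow> (bool list \<Rightarrow> bool) \<Rightarrow> bool list \<Rightarrow> bool" where
  "restr n f x = (if length x = n then f x else False)"

lemma restr_has: "has_prog U n (restr n f) = has_prog U n f"
  by (simp add: has_prog_def restr_def)
lemma restr_prog: "prog_size U n (restr n f) = prog_size U n f"
  by (simp add: prog_size_def restr_def)
lemma restr_circ: "circ_size n (restr n f) = circ_size n f"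
  by (simp add: circ_size_def circuit_computes_def restr_def)

lemma finite_set: "finite {real (circ_size n f) / real (prog_size U n f) | f. has_prog U n f}"
proof -
  let ?F = "\<lambda>f. real (circ_size n f) / real (prog_size U n f)"
  have fin: "finite {x :: bool list. length x = n}"
    using finite_lists_length_eq[of "UNIV :: bool set" n] by simp
  have r: "range (restr n) \<subseteq> (\<lambda>A x. x \<in> A) ` Pow {x :: bool list. length x = n}"
  proof
    fix g assume "g \<in> range (restr n)"
    then obtain f where "g = restr n f" by auto
    then have "g = (\<lambda>x. x \<in> {x. length x = n \<and> f x})" by (auto simp: restr_def fun_eq_iff)
    then show "g \<in> (\<lambda>A x. x \<in> A) ` Pow {x :: bool list. length x = n}" by blast
  qed
  have "{?F f | f. has_prog U n f} \<subseteq> ?F ` range (restr n)"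
  proof
    fix v assume "v \<in> {?F f | f. has_prog U n f}"
    then obtain f where "v = ?F f" by auto
    then have "v = ?F (restr n f)" by (simp add: restr_prog restr_circ)
    then show "v \<in> ?F ` range (restr n)" by blast
  qed
  moreover have "finite (?F ` range (restr n))"
    using finite_subset[OF r] fin by blast
  ultimately show ?thesis using finite_subset by blast
qed

theorem mainTheorem12:
  fixes c :: nat and U :: interp
  assumes "c > 1"
    and "univ_interp_props c U"
  shows "(\<lambda>n. Sup {real (circ_size n f) / real (prog_size U n f) | f. has_prog U n f})
           \<in> \<Omega>(\<lambda>n. real n * ln (real n))"
proof -
  have "1 < real c" using assms(1) by simp
  then obtain h N where hN: "\<forall>x. N \<le> length x \<longrightarrow> U h x = Some (allg x)"
    using assms(2) andM_time unfolding univ_interp_props_def by blast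
  have L2: "2 \<le> length h" using assms(2) hN unfolding univ_interp_props_def
    by (metis le_refl length_replicate option.distinct(1))
  define L where "L = length h"
  have Lpos: "real L > 0" using L2 L_def by linarith
  have ev: "\<forall>n\<ge>max N 1. Sup {real (circ_size n f) / real (prog_size U n f) | f. has_prog U n f}
            \<ge> (1 / (ln 2 * real L)) * (real n * ln (real n))"
  proof (intro allI impI)
    fix n :: nat assume n: "max N 1 \<le> n"
    have hp: "\<forall>x. length x = n \<longrightarrow> U h x = Some (allg x)" using hN n by auto
    then have has: "has_prog U n allg" unfolding has_prog_def by blast
    have ex: "\<exists>k h. length h = k \<and> (\<forall>x. length x = n \<longrightarrow> U h x = Some (allg x))" using hp by blast
    have ps1: "prog_size U n allg \<le> L" unfolding prog_size_def L_def
      by (rule Least_le) (use hp in blast)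
    obtain h' where h': "length h' = prog_size U n allg" "\<forall>x. length x = n \<longrightarrow> U h' x = Some (allg x)"
      using LeastI_ex[OF ex] unfolding prog_size_def by blast
    have "U h' (replicate n True) \<noteq> None" using h'(2) by simp
    then have ps2: "2 \<le> prog_size U n allg" using assms(2) h'(1) unfolding univ_interp_props_def by metis
    have cs: "real n * log 2 (real n) \<le> real (circ_size n allg)"
    proof -
      have "real n * log 2 (real n) \<le> real n * real (clog2 n)"
        by (intro mult_left_mono clog2_ge) auto
      also have "\<dots> \<le> real (circ_size n allg)" using circ_size_ge[of n] n by (simp flip: of_nat_mult)
      finally show ?thesis .
    qed
    have nn: "0 \<le> real n * log 2 (real n)" using n by simp
    have "(1 / (ln 2 * real L)) * (real n * ln (real n)) = real n * log 2 (real n) / real L"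
      by (simp add: log_def field_simps)
    also have "\<dots> \<le> real (circ_size n allg) / real L"
      using cs Lpos by (simp add: divide_right_mono)
    also have "\<dots> \<le> real (circ_size n allg) / real (prog_size U n allg)"
      using ps1 ps2 by (intro divide_left_mono) auto
    also have "\<dots> \<le> Sup {real (circ_size n f) / real (prog_size U n f) | f. has_prog U n f}"
      by (rule cSup_upper) (use has finite_set bdd_above_finite in auto)
    finally show "Sup {real (circ_size n f) / real (prog_size U n f) | f. has_prog U n f}
            \<ge> (1 / (ln 2 * real L)) * (real n * ln (real n))" .
  qed
  show ?thesis
  proof (rule landau_omega.bigI[of "1 / (ln 2 * real L)"])
    show "0 < 1 / (ln 2 * real L)" using Lpos by simp
    have "eventually (\<lambda>n. n \<ge> max N 1) at_top" by (rule eventually_ge_at_top)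
    then show "eventually (\<lambda>n. norm (Sup {real (circ_size n f) / real (prog_size U n f) | f. has_prog U n f})
        \<ge> 1 / (ln 2 * real L) * norm (real n * ln (real n))) at_top"
    proof (rule eventually_mono)
      fix n :: nat assume n: "n \<ge> max N 1"
      have p: "0 \<le> real n * ln (real n)" using n by simp
      show "norm (Sup {real (circ_size n f) / real (prog_size U n f) | f. has_prog U n f})
        \<ge> 1 / (ln 2 * real L) * norm (real n * ln (real n))"
        proof -
        have "norm (real n * ln (real n)) = real n * ln (real n)" using p by simp
        moreover have "Sup {real (circ_size n f) / real (prog_size U n f) | f. has_prog U n f} \<le>
            norm (Sup {real (circ_size n f) / real (prog_size U n f) | f. has_prog U n f})" by simp
        ultimately show ?thesis using ev n by (metis (no_types, lifting) order_trans)
      qed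
    qed
  qed
qed


end
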